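(* Let $p,q$ be positive integers, $e\in\mathbb{R}^p$ the vector of all ones, and let $(z,w)\in\mathbb{R}^p\times\mathbb{R}^q$ satisfy $z^+\not\ge\|w\|e$ and $\langle z^-,e\rangle<\|w\|$. If $\langle e,|z|\rangle<\|w\|$, then for every $\lambda_0>0$ the sequence given by $$\lambda_{k+1}=\frac{1}{\|w\|}\left\langle e,[(\lambda_k+1)z-\|w\|e]^-\right\rangle,\qquad k=0,1,\ldots,$$ converges to the unique solution of the equation $\lambda\|w\|=\langle e,[(\lambda+1)z-\|w\|e]^-\rangle$.
   Context: For $\alpha\in\mathbb{R}$, $\alpha^+:=\max(\alpha,0)$ and $\alpha^-:=\max(-\alpha,0)$; for vectors, $z^+$, $z^-$ and $|z|$ are taken componentwise. The order $\ge$ is componentwise; $z^+\not\ge\|w\|e$ means that $z^+\ge\|w\|e$ fails. *)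

theory Defs
  imports "HOL-Analysis.Analysis"
begin

definition vpos :: "real ^ 'n \<Rightarrow> real ^ 'n" where
  "vpos x = (\<chi> i. max (x $ i) 0)"

definition vneg :: "real ^ 'n \<Rightarrow> real ^ 'n" where
  "vneg x = (\<chi> i. max (- (x $ i)) 0)"

definition vabs :: "real ^ 'n \<Rightarrow> real ^ 'n" where
  "vabs x = (\<chi> i. \<bar>x $ i\<bar>)"

definition ones :: "real ^ 'n" where
  "ones = (\<chi> i. 1)"

end

theory Submission
  imports Defs
begin

lemma G_eq: "ones \<bullet> vneg ((l + 1) *\<^sub>R z - c *\<^sub>R ones) = (\<Sum>i\<in>UNIV. max (c - (l+1) * (z::real^'p) $ i) 0)"
  by (simp add: inner_vec_def ones_def vneg_def)

lemma G_lip: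
  fixes z :: "real ^ 'p"
  shows "\<bar>ones \<bullet> vneg ((a + 1) *\<^sub>R z - c *\<^sub>R ones) - ones \<bullet> vneg ((b + 1) *\<^sub>R z - c *\<^sub>R ones)\<bar>
     \<le> (ones \<bullet> vabs z) * \<bar>a - b\<bar>"
proof -
  have "\<bar>(\<Sum>i\<in>UNIV. max (c - (a+1) * z $ i) 0) - (\<Sum>i\<in>UNIV. max (c - (b+1) * z $ i) 0)\<bar>
     = \<bar>\<Sum>i\<in>UNIV. max (c - (a+1) * z $ i) 0 - max (c - (b+1) * z $ i) 0\<bar>"
    by (simp add: sum_subtractf)
  also have "\<dots> \<le> (\<Sum>i\<in>UNIV. \<bar>max (c - (a+1) * z $ i) 0 - max (c - (b+1) * z $ i) 0\<bar>)"
    by (rule sum_abs)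
  also have "\<dots> \<le> (\<Sum>i\<in>UNIV. \<bar>z $ i\<bar> * \<bar>a - b\<bar>)"
  proof (rule sum_mono)
    fix i
    have m: "\<bar>max x 0 - max y 0\<bar> \<le> \<bar>x - y\<bar>" for x y :: real unfolding max_def by (auto simp: abs_if)
    have e: "(c - (a+1) * z $ i) - (c - (b+1) * z $ i) = z $ i * (b - a)" by (simp add: algebra_simps)
    have "\<bar>max (c - (a+1) * z $ i) 0 - max (c - (b+1) * z $ i) 0\<bar> \<le> \<bar>z $ i * (b - a)\<bar>"
      using m[of "c - (a+1) * z $ i" "c - (b+1) * z $ i"] unfolding e .
    then show "\<bar>max (c - (a+1) * z $ i) 0 - max (c - (b+1) * z $ i) 0\<bar> \<le> \<bar>z $ i\<bar> * \<bar>a - b\<bar>"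
      by (simp add: abs_mult abs_minus_commute)
  qed
  also have "\<dots> = (ones \<bullet> vabs z) * \<bar>a - b\<bar>"
    by (simp add: inner_vec_def ones_def vabs_def sum_distrib_right)
  finally show ?thesis by (simp add: G_eq)
qed

theorem proposition5:
  fixes z :: "real ^ 'p" and w :: "real ^ 'q"
  assumes h1: "\<not> (vpos z \<ge> norm w *\<^sub>R ones)"
    and h2: "vneg z \<bullet> ones < norm w"
    and h3: "ones \<bullet> vabs z < norm w"
  shows "(\<exists>!l::real. l * norm w = ones \<bullet> vneg ((l + 1) *\<^sub>R z - norm w *\<^sub>R ones))
    \<and> (\<forall>(lam :: nat \<Rightarrow> real). lam 0 > 0 \<and>
         (\<forall>k. lam (Suc k) = (1 / norm w) * (ones \<bullet> vneg ((lam k + 1) *\<^sub>R z - norm w *\<^sub>R ones)))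
       \<longrightarrow> lam \<longlonglongrightarrow>
           (THE l::real. l * norm w = ones \<bullet> vneg ((l + 1) *\<^sub>R z - norm w *\<^sub>R ones)))"
proof -
  define n where "n = norm w"
  define G where "G l = ones \<bullet> vneg ((l + 1) *\<^sub>R z - n *\<^sub>R ones)" for l
  define S where "S = ones \<bullet> vabs z"
  have S0: "S \<ge> 0" unfolding S_def by (simp add: inner_vec_def ones_def vabs_def sum_nonneg)
  have n0: "n > 0" using S0 h3 unfolding S_def n_def by linarith
  define c where "c = S / n"
  have c0: "0 \<le> c" "c < 1" using S0 n0 h3 unfolding c_def S_def n_def by (auto simp: field_simps)
  have lip: "\<bar>G a / n - G b / n\<bar> \<le> c * \<bar>a - b\<bar>" for a b
  proof -
    have "\<bar>G a / n - G b / n\<bar> = \<bar>G a - G b\<bar> / n" using n0 by (simp add: diff_divide_distrib[symmetric])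
    also have "\<dots> \<le> S * \<bar>a - b\<bar> / n" using G_lip[of a z n b] n0 unfolding G_def S_def
      by (simp add: divide_right_mono)
    finally show ?thesis by (simp add: c_def)
  qed
  have eqv: "l * n = G l \<longleftrightarrow> G l / n = l" for l using n0 by (auto simp: field_simps)
  have "\<exists>!x. G x / n = x"
    by (rule banach_fix_type[OF c0]) (auto simp: dist_real_def lip)
  then have ex1: "\<exists>!l. l * n = G l" by (simp add: eqv)
  define L where "L = (THE l. l * n = G l)"
  have L: "G L / n = L" using theI'[OF ex1] eqv unfolding L_def by blast
  have conv: "lam \<longlonglongrightarrow> L" if rec: "\<forall>k. lam (Suc k) = (1 / n) * G (lam k)" for lam
  proof -
    have b: "\<bar>lam k - L\<bar> \<le> c ^ k * \<bar>lam 0 - L\<bar>" for k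
    proof (induction k)
      case (Suc k)
      have "\<bar>lam (Suc k) - L\<bar> = \<bar>G (lam k) / n - G L / n\<bar>" by (subst L, subst rec[rule_format], simp)
      also have "\<dots> \<le> c * \<bar>lam k - L\<bar>" by (rule lip)
      also have "\<dots> \<le> c * (c ^ k * \<bar>lam 0 - L\<bar>)" using Suc c0 by (simp add: mult_left_mono)
      finally show ?case by simp
    qed simp
    have "(\<lambda>k. c ^ k) \<longlonglongrightarrow> 0"
      by (rule LIMSEQ_power_zero) (use c0 in auto)
    then have g: "(\<lambda>k. c ^ k * \<bar>lam 0 - L\<bar>) \<longlonglongrightarrow> 0"
      by (rule tendsto_mult_left_zero)
    have "(\<lambda>k. lam k - L) \<longlonglongrightarrow> 0"
      by (rule Lim_null_comparison[OF _ g]) (auto simp: b)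
    then show ?thesis by (simp add: LIM_zero_iff)
  qed
  show ?thesis
  proof
    show "\<exists>!l. l * norm w = ones \<bullet> vneg ((l + 1) *\<^sub>R z - norm w *\<^sub>R ones)"
      using ex1 unfolding n_def G_def .
    show "\<forall>(lam :: nat \<Rightarrow> real). lam 0 > 0 \<and>
         (\<forall>k. lam (Suc k) = (1 / norm w) * (ones \<bullet> vneg ((lam k + 1) *\<^sub>R z - norm w *\<^sub>R ones)))
       \<longrightarrow> lam \<longlonglongrightarrow>
           (THE l::real. l * norm w = ones \<bullet> vneg ((l + 1) *\<^sub>R z - norm w *\<^sub>R ones))"
    proof (intro allI impI)
      fix lam :: "nat \<Rightarrow> real"
      assume a: "lam 0 > 0 \<and>
         (\<forall>k. lam (Suc k) = (1 / norm w) * (ones \<bullet> vneg ((lam k + 1) *\<^sub>R z - norm w *\<^sub>R ones)))"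
      then have "\<forall>k. lam (Suc k) = (1 / n) * G (lam k)" unfolding n_def G_def by blast
      then have "lam \<longlonglongrightarrow> L" by (rule conv)
      then show "lam \<longlonglongrightarrow>
           (THE l::real. l * norm w = ones \<bullet> vneg ((l + 1) *\<^sub>R z - norm w *\<^sub>R ones))"
        unfolding L_def n_def G_def .
    qed
  qed
qed

end
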